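(* Let $m$ and $k$ be positive integers with $m\le k-2$. Let $G$ be an inflator graph of order $k$ with drop $m$ and distinguished vertex set $\{a,b\}$. Let $H$ be the graph obtained from $G$ by adding a new vertex $x$ and the two edges $ax$ and $bx$. Then $H$ is nonhamiltonian and homogeneously traceable.
   Context: All graphs are finite and simple; the order of a path is its number of vertices. For vertices $u,v$ of $G$, $\tau_G(u,v)$ is the order of a longest path in $G$ with endvertices $u$ and $v$. Let $G$ be a graph of order $k\ge 3$ and $m\le k-2$ a positive integer. $G$ is an inflator graph with drop $m$ if it has two distinguished vertices $a,b$ such that: (D-1) $\tau_G(a,b)=k-m$; (D-2) each distinguished vertex is an endvertex of a path in $G$ containing all vertices of $G$ except the other distinguished vertex; (D-3) $G$ has a hamiltonian path starting at each distinguished vertex; (D-4) for every $v\in V(G)\setminus\{a,b\}$ there are a path $P$ from $v$ to one distinguished vertex and a path $Q$ having the other distinguished vertex as an endvertex (possibly $Q$ is that single vertex) such that $V(P)\cap V(Q)=\emptyset$ and $V(P)\cup V(Q)=V(G)$. A graph is homogeneously traceable if every vertex is an endvertex of a hamiltonian path; it is nonhamiltonian if it has no hamiltonian cycle. *)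

theory Defs
  imports Main
begin

definition simple_graph :: "'a set \<Rightarrow> ('a \<Rightarrow> 'a \<Rightarrow> bool) \<Rightarrow> bool" where
  "simple_graph V E \<longleftrightarrow> finite V \<and> (\<forall>u w. E u w \<longrightarrow> E w u)
     \<and> (\<forall>u. \<not> E u u) \<and> (\<forall>u w. E u w \<longrightarrow> u \<in> V \<and> w \<in> V)"

definition is_path :: "'a set \<Rightarrow> ('a \<Rightarrow> 'a \<Rightarrow> bool) \<Rightarrow> 'a list \<Rightarrow> bool" where
  "is_path V E p \<longleftrightarrow> p \<noteq> [] \<and> distinct p \<and> set p \<subseteq> V
     \<and> (\<forall>i. Suc i < length p \<longrightarrow> E (p ! i) (p ! Suc i))"

definition endvertex :: "'a \<Rightarrow> 'a list \<Rightarrow> bool" where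
  "endvertex u p \<longleftrightarrow> hd p = u \<or> last p = u"

definition tau :: "'a set \<Rightarrow> ('a \<Rightarrow> 'a \<Rightarrow> bool) \<Rightarrow> 'a \<Rightarrow> 'a \<Rightarrow> nat" where
  "tau V E u v = Max {length p | p. is_path V E p \<and> hd p = u \<and> last p = v}"

definition ham_path :: "'a set \<Rightarrow> ('a \<Rightarrow> 'a \<Rightarrow> bool) \<Rightarrow> 'a list \<Rightarrow> bool" where
  "ham_path V E p \<longleftrightarrow> is_path V E p \<and> set p = V"

definition hamiltonian :: "'a set \<Rightarrow> ('a \<Rightarrow> 'a \<Rightarrow> bool) \<Rightarrow> bool" where
  "hamiltonian V E \<longleftrightarrow> (\<exists>p. ham_path V E p \<and> length p \<ge> 3 \<and> E (last p) (hd p))"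

definition homogeneously_traceable :: "'a set \<Rightarrow> ('a \<Rightarrow> 'a \<Rightarrow> bool) \<Rightarrow> bool" where
  "homogeneously_traceable V E \<longleftrightarrow> (\<forall>v\<in>V. \<exists>p. ham_path V E p \<and> endvertex v p)"

definition inflator_graph :: "'a set \<Rightarrow> ('a \<Rightarrow> 'a \<Rightarrow> bool) \<Rightarrow> nat \<Rightarrow> nat \<Rightarrow> 'a \<Rightarrow> 'a \<Rightarrow> bool" where
  "inflator_graph V E k m a b \<longleftrightarrow>
     simple_graph V E \<and> card V = k \<and> k \<ge> 3 \<and> 0 < m \<and> m \<le> k - 2 \<and>
     a \<in> V \<and> b \<in> V \<and> a \<noteq> b \<and>
     \<comment> \<open>(D-1)\<close>
     tau V E a b = k - m \<and>
     \<comment> \<open>(D-2)\<close>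
     (\<exists>p. is_path V E p \<and> endvertex a p \<and> set p = V - {b}) \<and>
     (\<exists>p. is_path V E p \<and> endvertex b p \<and> set p = V - {a}) \<and>
     \<comment> \<open>(D-3)\<close>
     (\<exists>p. ham_path V E p \<and> hd p = a) \<and>
     (\<exists>p. ham_path V E p \<and> hd p = b) \<and>
     \<comment> \<open>(D-4)\<close>
     (\<forall>v \<in> V - {a, b}. \<exists>P Q. is_path V E P \<and> is_path V E Q \<and> hd P = v \<and>
        ((last P = a \<and> endvertex b Q) \<or> (last P = b \<and> endvertex a Q)) \<and>
        set P \<inter> set Q = {} \<and> set P \<union> set Q = V)"

definition add_vertex_edges :: "('a \<Rightarrow> 'a \<Rightarrow> bool) \<Rightarrow> 'a \<Rightarrow> 'a \<Rightarrow> 'a \<Rightarrow> 'a \<Rightarrow> 'a \<Rightarrow> bool" where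
  "add_vertex_edges E x a b u w \<longleftrightarrow> E u w \<or> (u = x \<and> (w = a \<or> w = b)) \<or> (w = x \<and> (u = a \<or> u = b))"

end

theory Submission
  imports Defs
begin

lemma is_path_Cons:
  "is_path V E (u # p) \<longleftrightarrow> u \<in> V \<and> u \<notin> set p \<and> (p = [] \<or> (is_path V E p \<and> E u (hd p)))"
proof (cases p)
  case Nil
  then show ?thesis by (auto simp: is_path_def)
next
  case (Cons w q)
  have "(\<forall>i. Suc i < length (u#p) \<longrightarrow> E ((u#p) ! i) ((u#p) ! Suc i)) \<longleftrightarrow>
        E u (hd p) \<and> (\<forall>i. Suc i < length p \<longrightarrow> E (p ! i) (p ! Suc i))"
  proof
    assume H: "\<forall>i. Suc i < length (u#p) \<longrightarrow> E ((u#p) ! i) ((u#p) ! Suc i)"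
    have "E u (hd p)" using H[rule_format, of 0] Cons by simp
    moreover have "\<forall>i. Suc i < length p \<longrightarrow> E (p ! i) (p ! Suc i)"
    proof (intro allI impI)
      fix i assume "Suc i < length p"
      then show "E (p ! i) (p ! Suc i)" using H[rule_format, of "Suc i"] by simp
    qed
    ultimately show "E u (hd p) \<and> (\<forall>i. Suc i < length p \<longrightarrow> E (p ! i) (p ! Suc i))" by blast
  next
    assume H: "E u (hd p) \<and> (\<forall>i. Suc i < length p \<longrightarrow> E (p ! i) (p ! Suc i))"
    show "\<forall>i. Suc i < length (u#p) \<longrightarrow> E ((u#p) ! i) ((u#p) ! Suc i)"
    proof (intro allI impI)
      fix i assume "Suc i < length (u#p)"
      then show "E ((u#p) ! i) ((u#p) ! Suc i)" using H Cons by (cases i) auto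
    qed
  qed
  then show ?thesis using Cons unfolding is_path_def by auto
qed

lemma is_path_append:
  "is_path V E (p @ q) \<longleftrightarrow> (p = [] \<and> is_path V E q) \<or> (q = [] \<and> is_path V E p) \<or>
     (is_path V E p \<and> is_path V E q \<and> set p \<inter> set q = {} \<and> E (last p) (hd q))"
proof (induction p)
  case Nil
  then show ?case by (auto simp: is_path_def)
next
  case (Cons u p)
  show ?case
  proof (cases p)
    case Nil
    then show ?thesis by (cases q) (auto simp: is_path_Cons)
  next
    case (Cons w r)
    then show ?thesis using Cons.IH by (cases q) (auto simp: is_path_Cons)
  qed
qed

lemma is_path_rev:
  assumes sym: "\<forall>u w. E u w \<longrightarrow> E w u"
  shows "is_path V E p \<Longrightarrow> is_path V E (rev p)"
proof (induction p)
  case Nil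
  then show ?case by (simp add: is_path_def)
next
  case (Cons u p)
  then show ?case using sym
    by (auto simp: is_path_append is_path_Cons last_rev)
qed

lemma is_path_restrict:
  assumes "is_path (insert x V) (add_vertex_edges E x a b) q" "x \<notin> set q"
  shows "is_path V E q"
  using assms unfolding is_path_def add_vertex_edges_def
  by (metis (no_types, lifting) Suc_lessD insert_subset less_eq_Suc_le nth_mem subset_insert
      Suc_le_lessD)

lemma is_path_extend:
  assumes "is_path V E q" 
  shows "is_path (insert x V) (add_vertex_edges E x a b) q"
  using assms unfolding is_path_def add_vertex_edges_def by auto

lemma tau_ge:
  assumes "finite V" "is_path V E p" "hd p = u" "last p = v"
  shows "length p \<le> tau V E u v"
proof -
  have "{p. is_path V E p \<and> hd p = u \<and> last p = v} \<subseteq> {xs. set xs \<subseteq> V \<and> length xs \<le> card V}"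
    using assms(1) by (auto simp: is_path_def intro: card_mono dest!: distinct_card[symmetric])
  then have "finite {p. is_path V E p \<and> hd p = u \<and> last p = v}"
    using finite_lists_length_le[OF assms(1)] finite_subset by blast
  then have "finite {length p | p. is_path V E p \<and> hd p = u \<and> last p = v}"
    by (simp add: setcompr_eq_image)
  then show ?thesis unfolding tau_def using assms by (intro Max_ge) auto
qed


lemma hd_neq_last: assumes "distinct q" "length q \<ge> 2" shows "hd q \<noteq> last q"
proof (cases q)
  case Nil then show ?thesis using assms by simp
next
  case (Cons u rest)
  have "rest \<noteq> []" "u \<notin> set rest" using Cons assms by auto
  then show ?thesis using Cons by auto
qed

theorem theorem2p22:
  fixes V :: "'a set" and E :: "'a \<Rightarrow> 'a \<Rightarrow> bool" and k m :: nat and a b x :: 'a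
  assumes "0 < m" and "0 < k" and "m \<le> k - 2"
    and "inflator_graph V E k m a b"
    and "x \<notin> V"
  shows "\<not> hamiltonian (insert x V) (add_vertex_edges E x a b)
       \<and> homogeneously_traceable (insert x V) (add_vertex_edges E x a b)"
proof -
  let ?E = "add_vertex_edges E x a b"
  let ?H = "insert x V"
  note inf = assms(4)[unfolded inflator_graph_def simple_graph_def]
  have sym: "\<forall>u w. E u w \<longrightarrow> E w u" and fin: "finite V" and cardV: "card V = k"
    and k3: "k \<ge> 3" and aV: "a \<in> V" and bV: "b \<in> V" and ab: "a \<noteq> b"
    and tauab: "tau V E a b = k - m" and EV: "\<forall>u w. E u w \<longrightarrow> u \<in> V \<and> w \<in> V"
    using inf by auto
  have sym': "\<forall>u w. ?E u w \<longrightarrow> ?E w u" using sym by (auto simp: add_vertex_edges_def)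
  have xnb: "\<And>w. ?E x w \<Longrightarrow> w = a \<or> w = b" using EV assms(5) by (auto simp: add_vertex_edges_def)
  have xnb2: "\<And>w. ?E w x \<Longrightarrow> w = a \<or> w = b" using EV assms(5) by (auto simp: add_vertex_edges_def)
  have xa: "?E x a" "?E b x" by (auto simp: add_vertex_edges_def)
  have xb: "?E x b" "?E a x" by (auto simp: add_vertex_edges_def)
  have nonham: "\<not> hamiltonian ?H ?E"
  proof
    assume "hamiltonian ?H ?E"
    then obtain p where hp: "ham_path ?H ?E p" and lp: "length p \<ge> 3" and cyc: "?E (last p) (hd p)"
      unfolding hamiltonian_def by blast
    have pp: "is_path ?H ?E p" and sp: "set p = ?H" using hp by (auto simp: ham_path_def)
    then obtain l r where pl: "p = l @ x # r" by (metis insertI1 split_list)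
    define q where "q = r @ l"
    have dp: "distinct p" using pp by (simp add: is_path_def)
    have xq: "x \<notin> set q" using dp pl q_def by auto
    have sq: "set q = V" using sp pl q_def assms(5) dp by auto
    have dq: "distinct q" using dp pl q_def by auto
    have lq: "length q = k" using distinct_card[OF dq] sq cardV by simp
    have pxr: "is_path ?H ?E (x # r)" and pl2: "l \<noteq> [] \<Longrightarrow> is_path ?H ?E l \<and> ?E (last l) x"
      using pp unfolding pl is_path_append by auto
    have qp: "is_path ?H ?E q"
    proof (cases "r = []")
      case True
      then have "l \<noteq> []" using q_def lq k3 by auto
      then show ?thesis using pl2 q_def True by auto
    next
      case rne: False
      have rp: "is_path ?H ?E r" using pxr rne by (simp add: is_path_Cons)
      show ?thesis
      proof (cases "l = []")
        case True then show ?thesis using rp q_def by simp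
      next
        case False
        have "?E (last r) (hd l)" using cyc pl False rne by simp
        then show ?thesis unfolding q_def is_path_append using rp pl2 False dq q_def by auto
      qed
    qed
    have hq: "hd q = a \<or> hd q = b"
    proof (cases "r = []")
      case True
      then have "l \<noteq> []" using lq k3 q_def by auto
      then have "hd q = hd p" "last p = x" using True pl q_def by auto
      then show ?thesis using cyc xnb by simp
    next
      case False
      then have "?E x (hd r)" using pxr by (simp add: is_path_Cons)
      then show ?thesis using xnb q_def False by simp
    qed
    have lastq: "last q = a \<or> last q = b"
    proof (cases "l = []")
      case True
      then have "r \<noteq> []" using lq k3 q_def by auto
      then have "last q = last p" "hd p = x" using True pl q_def by auto
      then show ?thesis using cyc xnb2 by simp
    next
      case False
      then show ?thesis using pl2 xnb2 q_def by simp
    qed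
    have hl: "hd q \<noteq> last q" using hd_neq_last[OF dq] lq k3 by simp
    have qV: "is_path V E q" using is_path_restrict[OF qp xq] .
    have "k \<le> tau V E a b"
    proof (cases "hd q = a")
      case True
      then have "last q = b" using lastq hl by auto
      then show ?thesis using tau_ge[OF fin qV] True lq by simp
    next
      case False
      then have "hd q = b" "last q = a" using hq lastq hl by auto
      then show ?thesis using tau_ge[OF fin is_path_rev[OF sym qV]] lq by (simp add: hd_rev last_rev)
    qed
    then show False using tauab assms(1) k3 by simp
  qed
  have ht: "homogeneously_traceable ?H ?E"
    unfolding homogeneously_traceable_def
  proof
    fix v assume vH: "v \<in> ?H"
    show "\<exists>p. ham_path ?H ?E p \<and> endvertex v p"
    proof (cases "v = x")
      case True
      obtain p where "ham_path V E p" "hd p = a" using inf by blast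
      then have "ham_path ?H ?E (x # p)" using assms(5) xa is_path_extend[of V E p x a b]
        unfolding ham_path_def is_path_Cons by (simp add: is_path_def)
      then show ?thesis using True by (auto simp: endvertex_def)
    next
      case vx: False
      show ?thesis
      proof (cases "v = a \<or> v = b")
        case True
        then obtain c where c: "(v = a \<and> c = b) \<or> (v = b \<and> c = a)" by blast
        obtain p0 where p0: "is_path V E p0" "endvertex c p0" "set p0 = V - {v}"
          using inf c by blast
        obtain p where p: "is_path V E p" "last p = c" "set p = V - {v}"
        proof (cases "last p0 = c")
          case True then show ?thesis using that p0 by blast
        next
          case False
          then have "hd p0 = c" using p0 by (simp add: endvertex_def)
          then show ?thesis using that[of "rev p0"] p0 is_path_rev[OF sym]
            by (simp add: last_rev)
        qed
        have pe: "is_path ?H ?E p" using is_path_extend[OF p(1)] by blast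
        have vp: "is_path ?H ?E [x, v]" using c vx assms(5) aV bV xa xb
          by (auto simp: is_path_Cons)
        have "is_path ?H ?E (p @ [x, v])"
        proof -
          have "v \<notin> set p" "x \<notin> set p" "p \<noteq> []" "?E (last p) x"
            using p c assms(5) xa xb pe by (auto simp: is_path_def)
          then show ?thesis unfolding is_path_append using pe vp by simp
        qed
        moreover have "set (p @ [x, v]) = ?H" using p c aV bV by auto
        ultimately show ?thesis by (intro exI[of _ "p @ [x, v]"]) (auto simp: ham_path_def endvertex_def)
      next
        case False
        then have vV: "v \<in> V - {a, b}" using vH vx by auto
        then obtain P Q where PQ: "is_path V E P" "is_path V E Q" "hd P = v"
          "(last P = a \<and> endvertex b Q) \<or> (last P = b \<and> endvertex a Q)"
          "set P \<inter> set Q = {}" "set P \<union> set Q = V"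
          using inf by blast
        obtain c d where cd: "(c = a \<and> d = b) \<or> (c = b \<and> d = a)" "last P = c" "endvertex d Q"
          using PQ(4) by blast
        obtain Q' where Q': "is_path V E Q'" "hd Q' = d" "set Q' = set Q"
        proof (cases "hd Q = d")
          case True then show ?thesis using that PQ by blast
        next
          case False
          then have "last Q = d" using cd by (simp add: endvertex_def)
          then show ?thesis using that[of "rev Q"] PQ is_path_rev[OF sym]
            by (simp add: hd_rev)
        qed
        have Pe: "is_path ?H ?E P" using is_path_extend[OF PQ(1)] by blast
        have Qe: "is_path ?H ?E (x # Q')"
        proof -
          have "x \<notin> set Q'" "Q' \<noteq> []" "?E x (hd Q')" using Q' assms(5) cd xa xb PQ(6)
            by (auto simp: is_path_def)
          then show ?thesis unfolding is_path_Cons using is_path_extend[OF Q'(1)] by simp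
        qed
        have "is_path ?H ?E (P @ x # Q')"
        proof -
          have "set P \<inter> set (x # Q') = {}" "P \<noteq> []" "?E (last P) x"
            using PQ Q' cd assms(5) xa xb by (auto simp: is_path_def)
          then show ?thesis unfolding is_path_append using Pe Qe by simp
        qed
        moreover have "set (P @ x # Q') = ?H" using PQ Q' by auto
        moreover have "hd (P @ x # Q') = v" using PQ(1,3) by (simp add: is_path_def)
        ultimately show ?thesis by (intro exI[of _ "P @ x # Q'"]) (auto simp: ham_path_def endvertex_def)
      qed
    qed
  qed
  show ?thesis using nonham ht by blast
qed

end
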